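(* Let $F$ be the blow up of $\mathbb P^3$ along a line, with notation as in the context. A cycle $\alpha\xi^2+\beta\xi f\in A^2(F)$ lies in $\mathrm{Mov}(F)$ if and only if $\alpha\ge0$ and $\beta\ge0$.
   Context: $F\cong\mathbb P(\mathcal O_{\mathbb P^1}^{\oplus2}\oplus\mathcal O_{\mathbb P^1}(1))$ is the blow up of $\mathbb P^3$ along a line, with projection $\pi\colon F\to\mathbb P^1$; $\xi$ is the class of the tautological bundle (pullback of $\mathcal O_{\mathbb P^3}(1)$), $f$ the class of $\pi^*\mathcal O_{\mathbb P^1}(1)$; $A(F)\cong\mathbb Z[\xi,f]/(f^2,\xi^3-\xi^2f)$, $\xi^2f$ the class of a point. $\mathrm{Mov}(F)\subseteq A^2(F)\otimes\mathbb R$ is the dual of the pseudo-effective cone: the closure of the set of cycles $\zeta$ with $\zeta\cdot D\ge0$ for every effective divisor $D$. *)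

theory Defs
  imports "HOL-Analysis.Analysis"
begin

(* F = Bl_L P^3 = P(O + O + O(1)) over P^1.
   A^1(F) = Z xi + Z f, encoded as pairs (a,b) meaning a*xi + b*f.
   A^2(F) (x) R = R xi^2 + R xi f, encoded as pairs (alpha,beta) meaning
   alpha*xi^2 + beta*xi*f.
   A(F) = Z[xi,f]/(f^2, xi^3 - xi^2 f), xi^2 f = class of a point. *)

(* degree of the monomial xi^i f^j of codimension i+j = 3 in A^3(F) = Z*pt,
   read off from the relations f^2 = 0, xi^3 = xi^2 f = pt *)
definition top_deg :: "nat \<Rightarrow> nat \<Rightarrow> int" where
  "top_deg i j = (if i + j = 3 \<and> j \<le> 1 then 1 else 0)"

definition inter :: "int \<times> int \<Rightarrow> real \<times> real \<Rightarrow> real" where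
  "inter D z = (case D of (a,b) \<Rightarrow> case z of (\<alpha>,\<beta>) \<Rightarrow>
      of_int a * \<alpha> * of_int (top_deg 3 0) + of_int a * \<beta> * of_int (top_deg 2 1)
    + of_int b * \<alpha> * of_int (top_deg 2 1) + of_int b * \<beta> * of_int (top_deg 1 2))"

(* F is the toric variety
   { ([x0:x1:x2:x3],[s:t]) | x0 t = x1 s } with Cox ring k[s,t,e,x2,x3],
   x0 = e s, x1 = e t; the generators s,t have class f, e (the exceptional
   divisor) has class xi - f, and x2,x3 have class xi.  A class D is the class
   of an effective divisor iff H^0(F, O(D)) /= 0, i.e. iff the graded piece of
   the Cox ring of degree D contains a (nonzero) monomial
   s^p t^q e^m x2^i x3^j, of class (m+i+j) xi + (p+q-m) f. *)
definition effective_class :: "int \<times> int \<Rightarrow> bool" where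
  "effective_class D \<longleftrightarrow> (\<exists>p q m i j :: nat.
      D = (int m + int i + int j, int p + int q - int m))"

definition Mov :: "(real \<times> real) set" where
  "Mov = closure {z. \<forall>D. effective_class D \<longrightarrow> inter D z \<ge> 0}"

end

theory Submission
  imports Defs
begin

lemma inter_eq: "inter (a,b) (x,y) = of_int a * x + of_int a * y + of_int b * x"
  by (simp add: inter_def top_deg_def)

lemma set_eq: "{z. \<forall>D. effective_class D \<longrightarrow> inter D z \<ge> 0} = {0::real..} \<times> {0::real..}"
proof (intro set_eqI iffI)
  fix z :: "real \<times> real"
  assume "z \<in> {z. \<forall>D. effective_class D \<longrightarrow> inter D z \<ge> 0}"
  then have H: "\<And>D. effective_class D \<Longrightarrow> inter D z \<ge> 0" by blast
  obtain x y where z: "z = (x,y)" by (cases z)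
  have e1: "effective_class (0,1)" unfolding effective_class_def
    by (rule exI[of _ 1], rule exI[of _ 0], rule exI[of _ 0], rule exI[of _ 0], rule exI[of _ 0]) simp
  have e2: "effective_class (1,-1)" unfolding effective_class_def
    by (rule exI[of _ 0], rule exI[of _ 0], rule exI[of _ 1], rule exI[of _ 0], rule exI[of _ 0]) simp
  from H[OF e1] H[OF e2] show "z \<in> {0..} \<times> {0..}" by (simp add: z inter_eq)
next
  fix z :: "real \<times> real"
  assume "z \<in> {0..} \<times> {0..}"
  then obtain x y where z: "z = (x,y)" and x: "x \<ge> 0" and y: "y \<ge> 0" by auto
  show "z \<in> {z. \<forall>D. effective_class D \<longrightarrow> inter D z \<ge> 0}"
  proof (clarify)
    fix a b assume "effective_class (a,b)"
    then obtain p q m i j :: nat where ab: "a = int m + int i + int j" "b = int p + int q - int m"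
      unfolding effective_class_def by auto
    have "inter (a,b) z = (real i + real j) * (x + y) + real m * y + (real p + real q) * x"
      by (simp add: z inter_eq ab algebra_simps)
    also have "\<dots> \<ge> 0" using x y by simp
    finally show "0 \<le> inter (a,b) z" .
  qed
qed

theorem corollary4p2:
  fixes \<alpha> \<beta> :: real
  shows "(\<alpha>, \<beta>) \<in> Mov \<longleftrightarrow> \<alpha> \<ge> 0 \<and> \<beta> \<ge> 0"
proof -
  have M: "Mov = {0::real..} \<times> {0::real..}"
    unfolding Mov_def set_eq by (simp add: closed_Times closure_closed)
  show ?thesis unfolding M by simp
qed

end
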